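(* Let $p\in(2,5)$ and let $u \in \dot H^1(\mathbb R^3)\cap L^p(\mathbb R^3)$ be a radial, positive, radially decreasing solution of $$-\Delta u + u^{p-1} = I(u^p)\,u^{p-1}\quad\text{in }\mathbb R^3.$$ Then there exist $r_0>0$ and $C>0$ such that $$u(r) \le \frac{C}{r^{2/(p-2)}}\qquad \text{for all } r>r_0,$$ where $u(r)$ denotes the value of $u$ at $|x|=r$.
   Context: For $f$ on $\mathbb R^3$, the Riesz potential is $I(f)(x) = \frac{1}{4\pi}\int_{\mathbb R^3} \frac{f(y)}{|x-y|}\,dy$. *)

theory Defs
  imports "HOL-Analysis.Analysis"
begin

type_synonym R3 = "real ^ 3"

definition dpart :: "3 \<Rightarrow> (R3 \<Rightarrow> real) \<Rightarrow> R3 \<Rightarrow> real" where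
  "dpart i f x = deriv (\<lambda>t. f (x + t *\<^sub>R axis i 1)) 0"

fun iter_partial :: "3 list \<Rightarrow> (R3 \<Rightarrow> real) \<Rightarrow> R3 \<Rightarrow> real" where
  "iter_partial [] f = f"
| "iter_partial (i # is) f = dpart i (iter_partial is f)"

definition smooth3 :: "(R3 \<Rightarrow> real) \<Rightarrow> bool" where
  "smooth3 f \<longleftrightarrow> (\<forall>is. continuous_on UNIV (iter_partial is f) \<and>
      (\<forall>x i. (\<lambda>t. iter_partial is f (x + t *\<^sub>R axis i 1)) differentiable (at 0)))"

definition test_fun :: "(R3 \<Rightarrow> real) \<Rightarrow> bool" where
  "test_fun \<phi> \<longleftrightarrow> smooth3 \<phi> \<and> compact (closure {x. \<phi> x \<noteq> 0})"

definition riesz :: "(R3 \<Rightarrow> real) \<Rightarrow> R3 \<Rightarrow> real" where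
  "riesz f x = (1 / (4 * pi)) * (LINT y|lborel. f y / dist x y)"

definition weak_gradient :: "(R3 \<Rightarrow> real) \<Rightarrow> (R3 \<Rightarrow> R3) \<Rightarrow> bool" where
  "weak_gradient u G \<longleftrightarrow>
     (\<forall>i. (\<lambda>x. G x $ i) \<in> borel_measurable lborel) \<and>
     (\<forall>K. compact K \<longrightarrow> set_integrable lborel K u \<and>
            (\<forall>i. set_integrable lborel K (\<lambda>x. G x $ i))) \<and>
     (\<forall>\<phi> i. test_fun \<phi> \<longrightarrow>
        (LINT x|lborel. u x * dpart i \<phi> x) = - (LINT x|lborel. G x $ i * \<phi> x))"

definition in_dotH1 :: "(R3 \<Rightarrow> real) \<Rightarrow> bool" where
  "in_dotH1 u \<longleftrightarrow> u \<in> borel_measurable lborel \<and>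
     (\<exists>G. weak_gradient u G \<and> integrable lborel (\<lambda>x. (norm (G x))\<^sup>2))"

definition in_Lp :: "real \<Rightarrow> (R3 \<Rightarrow> real) \<Rightarrow> bool" where
  "in_Lp p u \<longleftrightarrow> u \<in> borel_measurable lborel \<and> integrable lborel (\<lambda>x. \<bar>u x\<bar> powr p)"

definition weak_solution :: "real \<Rightarrow> (R3 \<Rightarrow> real) \<Rightarrow> bool" where
  "weak_solution p u \<longleftrightarrow>
     (\<exists>G. weak_gradient u G \<and> integrable lborel (\<lambda>x. (norm (G x))\<^sup>2) \<and>
       (AE x in lborel. integrable lborel (\<lambda>y. u y powr p / dist x y)) \<and>
       (\<forall>\<phi>. test_fun \<phi> \<longrightarrow>
          integrable lborel (\<lambda>x. riesz (\<lambda>y. u y powr p) x * u x powr (p - 1) * \<phi> x) \<and>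
          (LINT x|lborel. (\<Sum>i\<in>UNIV. G x $ i * dpart i \<phi> x) + u x powr (p - 1) * \<phi> x)
          = (LINT x|lborel. riesz (\<lambda>y. u y powr p) x * u x powr (p - 1) * \<phi> x)))"

end

theory Submission
  imports Defs "HOL-Computational_Algebra.Polynomial"
begin

primrec Q :: "nat \<Rightarrow> real poly" where
  "Q 0 = 1"
| "Q (Suc k) = [:0,0,1:] * (Q k - pderiv (Q k))"

definition H :: "nat \<Rightarrow> real \<Rightarrow> real" where
  "H k t = (if 0 < t then poly (Q k) (1/t) * exp (-(1/t)) else 0)"

lemma poly_exp_lim: "((\<lambda>y. poly q y * exp (-y)) \<longlongrightarrow> (0::real)) at_top"
proof -
  have "((\<lambda>y. \<Sum>i\<le>degree q. coeff q i * (y ^ i / exp y)) \<longlongrightarrow> (\<Sum>i\<le>degree q. coeff q i * 0)) at_top"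
    by (intro tendsto_sum tendsto_mult tendsto_const tendsto_power_div_exp_0)
  moreover have "(\<lambda>y. \<Sum>i\<le>degree q. coeff q i * (y ^ i / exp y)) = (\<lambda>y. poly q y * exp (-y))"
    by (auto simp: poly_altdef sum_divide_distrib exp_minus field_simps)
  ultimately show ?thesis by simp
qed

lemma H_deriv_pos:
  assumes "0 < t"
  shows "(H k has_real_derivative H (Suc k) t) (at t)"
proof -
  have d: "((\<lambda>t. poly (Q k) (1/t) * exp (-(1/t))) has_real_derivative
      (poly (pderiv (Q k)) (1/t) * (- 1 / t^2) * exp (-(1/t)) + poly (Q k) (1/t) * (exp (-(1/t)) * (1/t^2)))) (at t)"
    using assms
    by (auto intro!: derivative_eq_intros DERIV_chain2[OF poly_DERIV] simp: power2_eq_square field_simps)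
  have e: "poly (pderiv (Q k)) (1/t) * (- 1 / t^2) * exp (-(1/t)) + poly (Q k) (1/t) * (exp (-(1/t)) * (1/t^2))
        = H (Suc k) t"
    using assms by (simp add: H_def algebra_simps power2_eq_square)
  show ?thesis
    apply (rule has_field_derivative_transform_within_open[where S="{0<..}"])
    using d e assms by (auto simp: H_def)
qed

lemma H_deriv_neg:
  assumes "t < 0"
  shows "(H k has_real_derivative H (Suc k) t) (at t)"
proof -
  have "((\<lambda>_. 0) has_real_derivative 0) (at t)" by simp
  then have "(H k has_real_derivative 0) (at t)"
    apply (rule has_field_derivative_transform_within_open[where S="{..<0}"])
    using assms by (auto simp: H_def)
  moreover have "H (Suc k) t = 0" using assms by (simp add: H_def)
  ultimately show ?thesis by simp
qed

lemma H_deriv_zero: "(H k has_real_derivative H (Suc k) 0) (at 0)"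
proof -
  have "((\<lambda>y. (H k y - H k 0) / (y - 0)) \<longlongrightarrow> 0) (at 0)"
  proof (rule filterlim_split_at)
    show "((\<lambda>y. (H k y - H k 0) / (y - 0)) \<longlongrightarrow> 0) (at_left 0)"
      by (rule tendsto_eventually) (auto simp: H_def eventually_at_left_field intro: exI[of _ "-1"])
    have lim: "((\<lambda>y. poly (Q k * [:0,1:]) y * exp (-y)) \<longlongrightarrow> 0) at_top"
      by (rule poly_exp_lim)
    have "((\<lambda>x. (H k (inverse x) - H k 0) / (inverse x - 0)) \<longlongrightarrow> 0) at_top"
      apply (rule Lim_transform_eventually[OF lim])
      using eventually_gt_at_top[of "0::real"]
      by eventually_elim (auto simp: H_def field_simps)
    then show "((\<lambda>y. (H k y - H k 0) / (y - 0)) \<longlongrightarrow> 0) (at_right 0)"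
      by (simp add: filterlim_at_right_to_0 at_right_to_top filterlim_at_top_to_right)
  qed
  then show ?thesis by (simp add: has_field_derivative_iff H_def)
qed

lemma H_deriv: "(H k has_real_derivative H (Suc k) t) (at t)"
  using H_deriv_pos H_deriv_neg H_deriv_zero by (cases "t < 0"; cases "t = 0") auto

lemma H_cont: "isCont (H k) t"
  using H_deriv DERIV_isCont by blast

lemma H0_nonneg: "0 \<le> H 0 t" by (simp add: H_def)
lemma H0_pos: "0 < t \<Longrightarrow> 0 < H 0 t" by (simp add: H_def)
lemma H_nonpos: "t \<le> 0 \<Longrightarrow> H k t = 0" by (simp add: H_def)
lemma H0_mono: "0 < a \<Longrightarrow> a \<le> b \<Longrightarrow> H 0 a \<le> H 0 b"
  by (simp add: H_def frac_le)


inductive_set SC :: "(R3 \<Rightarrow> real) set" where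
  sc_const: "(\<lambda>x. c) \<in> SC"
| sc_coord: "(\<lambda>x. x $ j) \<in> SC"
| sc_gen: "(\<lambda>x. H k (a + b * (x \<bullet> x))) \<in> SC"
| sc_add: "f \<in> SC \<Longrightarrow> g \<in> SC \<Longrightarrow> (\<lambda>x. f x + g x) \<in> SC"
| sc_mult: "f \<in> SC \<Longrightarrow> g \<in> SC \<Longrightarrow> (\<lambda>x. f x * g x) \<in> SC"

lemma H_cont_on: "continuous_on UNIV (H k)"
  using H_cont by (simp add: continuous_at_imp_continuous_on)

lemma SC_cont: "f \<in> SC \<Longrightarrow> continuous_on UNIV f"
proof (induction rule: SC.induct)
  case (sc_gen k a b)
  show ?case
    by (rule continuous_on_compose2[OF H_cont_on]) (auto intro!: continuous_intros)
qed (auto intro!: continuous_intros)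

lemma slice_inner: "(x + t *\<^sub>R axis i 1) \<bullet> (x + t *\<^sub>R axis i 1) = x \<bullet> x + 2 * t * (x $ i) + t^2"
  for x :: R3
  by (simp add: inner_add_left inner_add_right inner_axis inner_axis' inner_axis_axis power2_eq_square algebra_simps)

lemma SC_deriv: "f \<in> SC \<Longrightarrow> \<exists>f'\<in>SC. \<forall>x. ((\<lambda>t. f (x + t *\<^sub>R axis i 1)) has_real_derivative f' x) (at 0)"
proof (induction rule: SC.induct)
  case (sc_const c)
  show ?case by (rule bexI[of _ "\<lambda>x. 0"]) (auto intro: SC.intros)
next
  case (sc_coord j)
  show ?case
    by (rule bexI[of _ "\<lambda>x. if i = j then 1 else 0"])
       (auto intro!: derivative_eq_intros SC.intros simp: axis_def)
next
  case (sc_gen k a b)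
  show ?case
  proof (rule bexI[of _ "\<lambda>x. H (Suc k) (a + b * (x \<bullet> x)) * ((2 * b) * x $ i)"], intro allI)
    fix x :: R3
    have "((\<lambda>t. H k (a + b * (x \<bullet> x + 2 * t * (x $ i) + t^2))) has_real_derivative
           H (Suc k) (a + b * (x \<bullet> x + 2 * 0 * (x $ i) + 0^2)) * (b * (2 * (x $ i) + 2 * 0))) (at 0)"
      by (rule DERIV_chain2[OF H_deriv]) (auto intro!: derivative_eq_intros)
    then show "((\<lambda>t. H k (a + b * ((x + t *\<^sub>R axis i 1) \<bullet> (x + t *\<^sub>R axis i 1)))) has_real_derivative
           H (Suc k) (a + b * (x \<bullet> x)) * ((2 * b) * x $ i)) (at 0)"
      by (simp only: slice_inner) (simp add: algebra_simps)
  qed (auto intro!: SC.intros)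
next
  case (sc_add f g)
  then obtain f' g' where "f' \<in> SC" "g' \<in> SC"
    and "\<forall>x. ((\<lambda>t. f (x + t *\<^sub>R axis i 1)) has_real_derivative f' x) (at 0)"
    and "\<forall>x. ((\<lambda>t. g (x + t *\<^sub>R axis i 1)) has_real_derivative g' x) (at 0)" by blast
  then show ?case
    by (intro bexI[of _ "\<lambda>x. f' x + g' x"]) (auto intro!: derivative_eq_intros SC.intros)
next
  case (sc_mult f g)
  then obtain f' g' where "f' \<in> SC" "g' \<in> SC"
    and d1: "\<forall>x. ((\<lambda>t. f (x + t *\<^sub>R axis i 1)) has_real_derivative f' x) (at 0)"
    and d2: "\<forall>x. ((\<lambda>t. g (x + t *\<^sub>R axis i 1)) has_real_derivative g' x) (at 0)" by blast
  show ?case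
  proof (intro bexI[of _ "\<lambda>x. f' x * g x + f x * g' x"] allI)
    fix x
    show "((\<lambda>t. f (x + t *\<^sub>R axis i 1) * g (x + t *\<^sub>R axis i 1)) has_real_derivative f' x * g x + f x * g' x) (at 0)"
      using DERIV_mult[OF d1[rule_format, of x] d2[rule_format, of x]] by (simp add: ac_simps)
  qed (auto intro!: SC.intros \<open>f' \<in> SC\<close> \<open>g' \<in> SC\<close> sc_mult)
qed

lemma SC_dpart:
  assumes "f \<in> SC"
  obtains f' where "f' \<in> SC" "dpart i f = f'"
    "\<And>x. ((\<lambda>t. f (x + t *\<^sub>R axis i 1)) has_real_derivative f' x) (at 0)"
proof -
  obtain f' where f': "f' \<in> SC" "\<And>x. ((\<lambda>t. f (x + t *\<^sub>R axis i 1)) has_real_derivative f' x) (at 0)"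
    using SC_deriv[OF assms, of i] by blast
  have "dpart i f = f'"
    by (rule ext) (simp add: dpart_def DERIV_imp_deriv f'(2))
  with f' that show ?thesis by blast
qed

lemma SC_dpart_SC: "f \<in> SC \<Longrightarrow> dpart i f \<in> SC"
  by (metis SC_dpart)

lemma SC_iter: "f \<in> SC \<Longrightarrow> iter_partial is f \<in> SC"
  by (induction "is") (auto intro: SC_dpart_SC)

lemma SC_smooth: "f \<in> SC \<Longrightarrow> smooth3 f"
  unfolding smooth3_def
proof (intro allI conjI)
  fix "is" x i assume f: "f \<in> SC"
  show "continuous_on UNIV (iter_partial is f)" using SC_cont SC_iter f by blast
  obtain g where "g \<in> SC" "\<And>x. ((\<lambda>t. iter_partial is f (x + t *\<^sub>R axis i 1)) has_real_derivative g x) (at 0)"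
    using SC_dpart[OF SC_iter[OF f]] by metis
  then show "(\<lambda>t. iter_partial is f (x + t *\<^sub>R axis i 1)) differentiable at 0"
    using real_differentiable_def by blast
qed

lemma SC_scale: "f \<in> SC \<Longrightarrow> (\<lambda>x. f (s *\<^sub>R x)) \<in> SC"
proof (induction rule: SC.induct)
  case (sc_coord j)
  have "(\<lambda>x::R3. x $ j) \<in> SC" by (rule SC.sc_coord)
  from sc_mult[OF sc_const[of s] this] have "(\<lambda>x::R3. s * x $ j) \<in> SC" by simp
  then show ?case by simp
next
  case (sc_gen k a b)
  have "(\<lambda>x::R3. H k (a + (b * s^2) * (x \<bullet> x))) \<in> SC" by (rule SC.sc_gen)
  then show ?case by (simp add: power2_eq_square algebra_simps)
qed (auto intro: SC.intros)

lemma SC_dpart_scale: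
  assumes "f \<in> SC"
  shows "dpart i (\<lambda>x. f (s *\<^sub>R x)) x = s * dpart i f (s *\<^sub>R x)"
proof -
  obtain f' where f': "dpart i f = f'"
    "\<And>x. ((\<lambda>t. f (x + t *\<^sub>R axis i 1)) has_real_derivative f' x) (at 0)"
    using SC_dpart[OF assms] by metis
  have "((\<lambda>t. f (s *\<^sub>R x + (s * t) *\<^sub>R axis i 1)) has_real_derivative f' (s *\<^sub>R x) * s) (at 0)"
    using DERIV_chain2[of "\<lambda>t. f (s *\<^sub>R x + t *\<^sub>R axis i 1)" "f' (s *\<^sub>R x)" "\<lambda>t. s * t" 0 s]
      f'(2)[of "s *\<^sub>R x"] by (auto intro!: derivative_eq_intros)
  then have "((\<lambda>t. f (s *\<^sub>R (x + t *\<^sub>R axis i 1))) has_real_derivative f' (s *\<^sub>R x) * s) (at 0)"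
    by (simp add: scaleR_add_right)
  then show ?thesis
    by (simp add: dpart_def DERIV_imp_deriv f'(1) mult.commute)
qed

lemma dpart_vanish:
  assumes "open W" "y \<in> W" "\<And>x. x \<in> W \<Longrightarrow> f x = 0"
  shows "dpart i f y = 0"
proof -
  obtain e where e: "e > 0" "ball y e \<subseteq> W" using assms(1,2) open_contains_ball by blast
  have "eventually (\<lambda>t. y + t *\<^sub>R axis i 1 \<in> W) (nhds 0)"
    unfolding eventually_nhds_metric
    by (rule exI[of _ e]) (use e in \<open>auto simp: dist_norm\<close>)
  then have "eventually (\<lambda>t. f (y + t *\<^sub>R axis i 1) = 0) (nhds 0)"
    by eventually_elim (use assms(3) in auto)
  then have "deriv (\<lambda>t. f (y + t *\<^sub>R axis i 1)) 0 = deriv (\<lambda>_. 0) 0"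
    by (rule deriv_cong_ev) simp
  then show ?thesis by (simp add: dpart_def)
qed


lemma emeasure_ball3: "0 \<le> r \<Longrightarrow> emeasure lborel (ball (c::R3) r) = ennreal (4/3 * r^3 * pi)"
  using emeasure_eq_ennreal_measure[of lborel "ball c r"] emeasure_lborel_ball_finite[of c r]
    sphere_volume[of r c] by simp

lemma exists_pow2: assumes "1 < (z::real)" shows "\<exists>k::nat. 2^k < z \<and> z \<le> 2^(k+1)"
proof -
  obtain n::nat where n: "z < 2^n" using real_arch_pow[of 2 z] by auto
  define m where "m = (LEAST m::nat. z \<le> 2^m)"
  have zm: "z \<le> 2^m" unfolding m_def by (rule LeastI[of _ n]) (use n in auto)
  have "m \<noteq> 0"
  proof
    assume "m = 0" with zm assms show False by simp
  qed
  then obtain k where k: "m = Suc k" by (cases m) auto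
  have "\<not> z \<le> 2^k" using not_less_Least[of k "\<lambda>m. z \<le> 2^m"] k by (auto simp: m_def)
  then show ?thesis using zm k by (intro exI[of _ k]) auto
qed

lemma shell_bound:
  fixes x :: R3
  assumes "0 < \<rho>"
  shows "(\<integral>\<^sup>+y. ennreal (indicator (ball x \<rho>) y / dist x y) \<partial>lborel) \<le> ennreal (32/9 * pi * \<rho>^2)"
proof -
  define g where "g k y = ennreal (2^(k+1)/\<rho>) * indicator (ball x (\<rho>/2^k)) y" for k::nat and y::R3
  have pw: "ennreal (indicator (ball x \<rho>) y / dist x y) \<le> (\<Sum>k. g k y)" for y
  proof (cases "y \<in> ball x \<rho> \<and> y \<noteq> x")
    case True
    define d where "d = dist x y"
    have d: "0 < d" "d < \<rho>" using True by (auto simp: d_def)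
    obtain k::nat where k: "2^k < \<rho>/d" "\<rho>/d \<le> 2^(k+1)"
      using exists_pow2[of "\<rho>/d"] d by auto
    have "d < \<rho>/2^k" using k(1) d by (simp add: field_simps)
    then have yin: "y \<in> ball x (\<rho>/2^k)" by (simp add: d_def)
    have "1/d \<le> 2^(k+1)/\<rho>" using k(2) d assms by (simp add: field_simps)
    then have "ennreal (indicator (ball x \<rho>) y / dist x y) \<le> g k y"
      using True yin by (simp add: g_def d_def[symmetric] ennreal_leI)
    also have "g k y = sum (\<lambda>k. g k y) {k}" by simp
    also have "\<dots> \<le> (\<Sum>k. g k y)" by (rule sum_le_suminf) auto
    finally show ?thesis .
  next
    case False
    then show ?thesis by auto
  qed
  have "(\<integral>\<^sup>+y. ennreal (indicator (ball x \<rho>) y / dist x y) \<partial>lborel) \<le> (\<integral>\<^sup>+y. (\<Sum>k. g k y) \<partial>lborel)"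
    by (rule nn_integral_mono) (rule pw)
  also have "\<dots> = (\<Sum>k. \<integral>\<^sup>+y. g k y \<partial>lborel)"
    by (rule nn_integral_suminf) (auto simp: g_def intro!: borel_measurable_times_ennreal borel_measurable_indicator)
  also have "\<dots> = (\<Sum>k. ennreal (8/3 * pi * \<rho>^2 * (1/4)^k))"
  proof (rule suminf_cong)
    fix k
    have "(\<integral>\<^sup>+y. g k y \<partial>lborel) = ennreal (2^(k+1)/\<rho>) * emeasure lborel (ball x (\<rho>/2^k))"
      unfolding g_def by (subst nn_integral_cmult_indicator) auto
    also have "\<dots> = ennreal (2^(k+1)/\<rho> * (4/3 * (\<rho>/2^k)^3 * pi))"
      using assms by (simp add: emeasure_ball3, subst ennreal_mult[symmetric]) (auto simp: field_simps)
    also have "2^(k+1)/\<rho> * (4/3 * (\<rho>/2^k)^3 * pi) = 8/3 * pi * \<rho>^2 * (1/4)^k"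
      proof -
      have "(2::real)^(k*3) = 2^k * 4^k"
      proof -
        have "(2::real)^(k*3) = (2^3)^k" by (metis mult.commute power_mult)
        also have "\<dots> = (2*4)^k" by simp
        finally show ?thesis by (simp only: power_mult_distrib)
      qed
      moreover have "(2::real)^k * 2^k = 4^k" by (simp flip: power_mult_distrib)
      ultimately show ?thesis using assms by (simp add: field_simps power_divide power2_eq_square power3_eq_cube flip: power_mult)
    qed
    finally show "(\<integral>\<^sup>+y. g k y \<partial>lborel) = ennreal (8/3 * pi * \<rho>^2 * (1/4)^k)" .
  qed
  also have "\<dots> = ennreal (8/3 * pi * \<rho>^2 * (4/3))"
  proof (rule suminf_ennreal_eq)
    have "(\<lambda>k. (1/4::real)^k) sums (1 / (1 - 1/4))" by (rule geometric_sums) simp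
    then have "(\<lambda>k. 8/3 * pi * \<rho>^2 * (1/4::real)^k) sums (8/3 * pi * \<rho>^2 * (1 / (1 - 1/4)))"
      by (rule sums_mult)
    then show "(\<lambda>k. 8/3 * pi * \<rho>^2 * (1/4::real)^k) sums (8/3 * pi * \<rho>^2 * (4/3))" by simp
  qed simp
  also have "8/3 * pi * \<rho>^2 * (4/3) = 32/9 * pi * \<rho>^2" by simp
  finally show ?thesis by simp
qed

lemma lborel_scale3: "c \<noteq> 0 \<Longrightarrow> lborel = density (distr lborel borel (\<lambda>x::R3. c *\<^sub>R x)) (\<lambda>_. ennreal (\<bar>c\<bar>^3))"
  using lborel_affine[of c "0::R3"] by simp

lemma nn_integral_scale3:
  fixes f :: "R3 \<Rightarrow> ennreal"
  assumes [measurable]: "f \<in> borel_measurable borel" and c: "c \<noteq> 0"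
  shows "(\<integral>\<^sup>+x. f x \<partial>lborel) = ennreal (\<bar>c\<bar>^3) * (\<integral>\<^sup>+x. f (c *\<^sub>R x) \<partial>lborel)"
  by (subst lborel_scale3[OF c]) (simp add: nn_integral_density nn_integral_distr nn_integral_cmult)

lemma integrable_scale3:
  fixes f :: "R3 \<Rightarrow> real"
  assumes f: "integrable lborel f" and c: "c \<noteq> 0"
  shows "integrable lborel (\<lambda>x. f (c *\<^sub>R x))"
proof -
  have m[measurable]: "f \<in> borel_measurable borel" using f by auto
  have "(\<integral>\<^sup>+x. ennreal (norm (f x)) \<partial>lborel) < \<infinity>" using f by (simp add: integrable_iff_bounded)
  then have "ennreal (\<bar>c\<bar>^3) * (\<integral>\<^sup>+x. ennreal (norm (f (c *\<^sub>R x))) \<partial>lborel) < \<infinity>"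
    by (subst (asm) nn_integral_scale3[OF _ c]) auto
  then have "(\<integral>\<^sup>+x. ennreal (norm (f (c *\<^sub>R x))) \<partial>lborel) < \<infinity>"
    using c by (auto simp: ennreal_mult_less_top top_unique)
  then show ?thesis by (simp add: integrable_iff_bounded)
qed

lemma integral_scale3:
  fixes f :: "R3 \<Rightarrow> real"
  assumes c: "c \<noteq> 0"
  shows "integral\<^sup>L lborel f = \<bar>c\<bar>^3 * integral\<^sup>L lborel (\<lambda>x. f (c *\<^sub>R x))"
proof cases
  assume f: "integrable lborel f"
  then have [measurable]: "f \<in> borel_measurable borel" by auto
  show ?thesis
    using c f integrable_scale3[OF f c]
    by (subst lborel_scale3[OF c]) (simp add: integral_density integral_distr)
next
  assume nf: "\<not> integrable lborel f"
  have "\<not> integrable lborel (\<lambda>x. f (c *\<^sub>R x))"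
  proof
    assume "integrable lborel (\<lambda>x. f (c *\<^sub>R x))"
    from integrable_scale3[OF this, of "1/c"] c have "integrable lborel f" by simp
    with nf show False by simp
  qed
  with nf show ?thesis by (simp add: not_integrable_integral_eq)
qed


lemma exists_pow3: assumes "1 \<le> (z::real)" shows "\<exists>k::nat. 3^k \<le> z \<and> z < 3^(k+1)"
proof -
  obtain n::nat where n: "z < 3^n" using real_arch_pow[of 3 z] by auto
  define m where "m = (LEAST m::nat. z < 3^m)"
  have zm: "z < 3^m" unfolding m_def by (rule LeastI[of _ n]) (use n in auto)
  have "m \<noteq> 0"
  proof
    assume "m = 0" with zm assms show False by simp
  qed
  then obtain k where k: "m = Suc k" by (cases m) auto
  have "\<not> z < 3^k" using not_less_Least[of k "\<lambda>m. z < 3^m"] k by (auto simp: m_def)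
  then show ?thesis using zm k by (intro exI[of _ k]) auto
qed

lemma iterate_decay:
  fixes U :: "real \<Rightarrow> real"
  assumes p: "2 < p" and r1: "0 < r1" and K: "0 < K"
    and Upos: "\<And>s. 0 < s \<Longrightarrow> 0 < U s"
    and Umono: "\<And>s t. 0 < s \<Longrightarrow> s \<le> t \<Longrightarrow> U t \<le> U s"
    and rec: "\<And>r. r1 \<le> r \<Longrightarrow> U (3*r) powr (p-1) \<le> K * U r / r^2"
  shows "\<exists>C>0. \<forall>s>r1. U s \<le> C / s powr (2/(p-2))"
proof -
  define \<alpha> where "\<alpha> = 2/(p-2)"
  have \<alpha>: "0 < \<alpha>" "\<alpha> * (p-1) = \<alpha> + 2" using p by (auto simp: \<alpha>_def field_simps)
  define L where "L = K * 3 powr (\<alpha>*(p-1))"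
  have L: "0 < L" using K by (simp add: L_def)
  define B where "B = max (U r1 * r1 powr \<alpha>) (L powr (1/(p-2)))"
  have B: "0 < B" using Upos[OF r1] r1 L by (simp add: B_def max_def)
  have LB: "L \<le> B powr (p-2)"
  proof -
    have "L = (L powr (1/(p-2))) powr (p-2)" using L p by (simp add: powr_powr)
    also have "\<dots> \<le> B powr (p-2)" using p L by (intro powr_mono2) (auto simp: B_def)
    finally show ?thesis .
  qed
  have claim: "U (3^n * r1) * (3^n * r1) powr \<alpha> \<le> B" for n::nat
  proof (induction n)
    case 0 then show ?case by (simp add: B_def)
  next
    case (Suc n)
    define r where "r = 3^n * r1"
    have r: "r1 \<le> r" "0 < r" using r1 by (auto simp: r_def)
    have b: "U r * r powr \<alpha> \<le> B" using Suc by (simp add: r_def)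
    define b' where "b' = U (3*r) * (3*r) powr \<alpha>"
    have b'pos: "0 < b'" using r Upos[of "3*r"] by (simp add: b'_def)
    have "b' powr (p-1) = U (3*r) powr (p-1) * (3*r) powr (\<alpha>*(p-1))"
      using r Upos[of "3*r"] by (simp add: b'_def powr_mult powr_powr)
    also have "\<dots> \<le> (K * U r / r^2) * (3*r) powr (\<alpha>*(p-1))"
      by (rule mult_right_mono[OF rec[OF r(1)]]) simp
    also have "(3*r) powr (\<alpha>*(p-1)) = 3 powr (\<alpha>*(p-1)) * (r powr \<alpha> * r^2)"
      using r by (simp add: powr_mult \<alpha>(2) powr_add powr_numeral)
    also have "(K * U r / r^2) * (3 powr (\<alpha>*(p-1)) * (r powr \<alpha> * r^2)) = L * (U r * r powr \<alpha>)"
      using r by (simp add: L_def field_simps)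
    also have "\<dots> \<le> L * B" using b L by simp
    also have "\<dots> \<le> B powr (p-2) * B" using LB B by simp
    also have "\<dots> = B powr (p-1)"
    proof -
      have "B powr (p-2) * B = B powr (p-2) * B powr 1" using B by simp
      also have "\<dots> = B powr (p-2+1)" by (rule powr_add[symmetric])
      also have "\<dots> = B powr (p-1)" by simp
      finally show ?thesis .
    qed
    finally have "b' powr (p-1) \<le> B powr (p-1)" .
    then have "b' \<le> B" using p b'pos B powr_less_mono2[of "p-1" B b'] by force
    then show ?case by (simp add: b'_def r_def mult.assoc)
  qed
  show ?thesis
  proof (intro exI[of _ "B * 3 powr \<alpha>"] conjI allI impI)
    show "0 < B * 3 powr \<alpha>" using B by simp
    fix s assume s: "r1 < s"
    obtain n::nat where n: "3^n \<le> s/r1" "s/r1 < 3^(n+1)" using exists_pow3[of "s/r1"] s r1 by auto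
    have n': "3^n * r1 \<le> s" "s < 3^(n+1) * r1" using n r1 by (auto simp: field_simps)
    have pos: "0 < 3^n * r1" using r1 by simp
    have "U s \<le> U (3^n * r1)" using Umono[OF pos n'(1)] .
    also have "\<dots> \<le> B / (3^n * r1) powr \<alpha>" proof -
      have "0 < (3^n * r1) powr \<alpha>" using pos r1 by simp
      then show ?thesis using claim[of n] by (simp add: pos_le_divide_eq)
    qed
    also have "B / (3^n * r1) powr \<alpha> = B * 3 powr \<alpha> / (3^(n+1) * r1) powr \<alpha>"
      using r1 by (simp add: powr_mult powr_realpow[symmetric] powr_add field_simps)
    also have "\<dots> \<le> B * 3 powr \<alpha> / s powr \<alpha>"
      using B n' s r1 \<alpha> by (intro divide_left_mono powr_mono2 mult_pos_pos) auto
    finally show "U s \<le> B * 3 powr \<alpha> / s powr (2/(p-2))" by (simp add: \<alpha>_def)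
  qed
qed


definition psi :: "R3 \<Rightarrow> real" where
  "psi x = H 0 (-1 + 1 * (x \<bullet> x)) * H 0 (16 + (-1) * (x \<bullet> x))"

definition phi :: "real \<Rightarrow> R3 \<Rightarrow> real" where
  "phi r x = psi ((1/r) *\<^sub>R x)"

definition Lap :: "(R3 \<Rightarrow> real) \<Rightarrow> R3 \<Rightarrow> real" where
  "Lap f x = (\<Sum>i\<in>UNIV. dpart i (dpart i f) x)"

definition Wset :: "real \<Rightarrow> R3 set" where
  "Wset r = {x. norm x < r} \<union> {x. 4*r < norm x}"

lemma psi_SC: "psi \<in> SC"
  unfolding psi_def[abs_def] by (intro sc_mult sc_gen)

lemma phi_SC: "phi r \<in> SC"
  unfolding phi_def[abs_def] by (rule SC_scale[OF psi_SC])

lemma psi_nonneg: "0 \<le> psi x"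
  by (simp add: psi_def H0_nonneg)

lemma phi_nonneg: "0 \<le> phi r x"
  by (simp add: phi_def psi_nonneg)

lemma phi_inner: "0 < r \<Longrightarrow> ((1/r) *\<^sub>R x) \<bullet> ((1/r) *\<^sub>R x) = (norm x / r)^2"
  by (simp only: dot_square_norm norm_scaleR) (simp add: power_divide power_mult_distrib)

lemma phi_zero:
  assumes r: "0 < r" and x: "norm x \<le> r \<or> 4*r \<le> norm x"
  shows "phi r x = 0"
proof -
  have "(norm x / r)^2 \<le> 1 \<or> 16 \<le> (norm x / r)^2"
  proof (cases "norm x \<le> r")
    case True
    then have "norm x / r \<le> 1" "0 \<le> norm x / r" using r by (auto simp: field_simps)
    then have "(norm x / r)^2 \<le> 1^2" by (intro power_mono) auto
    then show ?thesis by simp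
  next
    case False
    then have "4 \<le> norm x / r" using x r by (auto simp: field_simps)
    then have "4^2 \<le> (norm x / r)^2" by (intro power_mono) auto
    then show ?thesis by simp
  qed
  moreover have "phi r x = H 0 ((norm x / r)^2 - 1) * H 0 (16 - (norm x / r)^2)"
    using r unfolding phi_def psi_def by (simp only: phi_inner) simp
  ultimately show ?thesis by (auto simp: H_nonpos)
qed

lemma Wset_open: "open (Wset r)"
  unfolding Wset_def by (intro open_Un open_Collect_less continuous_intros)

lemma phi_van: "0 < r \<Longrightarrow> x \<in> Wset r \<Longrightarrow> phi r x = 0"
  by (rule phi_zero) (auto simp: Wset_def)

lemma dpart_van: "(\<And>x. x \<in> Wset r \<Longrightarrow> f x = 0) \<Longrightarrow> x \<in> Wset r \<Longrightarrow> dpart i f x = 0"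
  by (rule dpart_vanish[OF Wset_open]) auto

lemma supp_sub: "(\<And>x. x \<in> Wset r \<Longrightarrow> f x = 0) \<Longrightarrow> {x. f x \<noteq> 0} \<subseteq> cball 0 (4*r)"
  by (force simp: Wset_def)

lemma test_fun_of: "f \<in> SC \<Longrightarrow> (\<And>x. x \<in> Wset r \<Longrightarrow> f x = 0) \<Longrightarrow> test_fun f"
  unfolding test_fun_def
  using SC_smooth bounded_subset[OF bounded_cball supp_sub] by auto

lemma bounded_fun:
  assumes "f \<in> SC" "\<And>x. x \<in> Wset r \<Longrightarrow> f x = 0"
  obtains M where "0 \<le> M" "\<And>x. \<bar>f x\<bar> \<le> M"
proof -
  have "compact (f ` cball 0 (4*r))"
    using SC_cont[OF assms(1)] by (intro compact_continuous_image) (auto intro: continuous_on_subset)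
  then obtain M where M: "\<And>y. y \<in> f ` cball 0 (4*r) \<Longrightarrow> norm y \<le> M"
    using compact_imp_bounded bounded_iff by metis
  have "\<bar>f x\<bar> \<le> max 0 M" for x
  proof (cases "x \<in> cball 0 (4*r)")
    case True then show ?thesis using M[of "f x"] by auto
  next
    case False then have "x \<in> Wset r" by (auto simp: Wset_def)
    then show ?thesis using assms(2) by simp
  qed
  then show ?thesis using that[of "max 0 M"] by auto
qed

lemma dpart_cmult:
  assumes "g \<in> SC"
  shows "dpart i (\<lambda>x. c * g x) = (\<lambda>x. c * dpart i g x)"
proof -
  obtain g' where g': "dpart i g = g'" "\<And>x. ((\<lambda>t. g (x + t *\<^sub>R axis i 1)) has_real_derivative g' x) (at 0)"
    using SC_dpart[OF assms] by metis
  show ?thesis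
    by (rule ext) (simp add: dpart_def g'(1) DERIV_imp_deriv DERIV_cmult[OF g'(2)])
qed

lemma dd_phi:
  assumes r: "0 < r"
  shows "dpart i (dpart i (phi r)) x = (1/r)^2 * dpart i (dpart i psi) ((1/r) *\<^sub>R x)"
proof -
  have d1: "dpart i (phi r) = (\<lambda>x. (1/r) * dpart i psi ((1/r) *\<^sub>R x))"
    unfolding phi_def[abs_def] by (rule ext) (rule SC_dpart_scale[OF psi_SC])
  have s: "(\<lambda>x. dpart i psi ((1/r) *\<^sub>R x)) \<in> SC"
    by (intro SC_scale SC_dpart_SC psi_SC)
  have "dpart i (dpart i (phi r)) = (\<lambda>x. (1/r) * dpart i (\<lambda>x. dpart i psi ((1/r) *\<^sub>R x)) x)"
    unfolding d1 by (rule dpart_cmult[OF s])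
  also have "\<dots> = (\<lambda>x. (1/r) * ((1/r) * dpart i (dpart i psi) ((1/r) *\<^sub>R x)))"
    by (rule ext) (simp only: SC_dpart_scale[OF SC_dpart_SC[OF psi_SC]])
  finally show ?thesis by (simp add: power2_eq_square)
qed

lemma Lap_phi: "0 < r \<Longrightarrow> Lap (phi r) x = (1/r)^2 * Lap psi ((1/r) *\<^sub>R x)"
  by (simp add: Lap_def dd_phi sum_distrib_left)

lemma Lap_SC: "f \<in> SC \<Longrightarrow> Lap f \<in> SC"
proof -
  assume f: "f \<in> SC"
  have "(\<lambda>x. \<Sum>i\<in>F. dpart i (dpart i f) x) \<in> SC" for F :: "3 set"
  proof (induction F rule: infinite_finite_induct)
    case (infinite A) then show ?case by (simp add: sc_const)
  next
    case empty then show ?case by (simp add: sc_const)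
  next
    case (insert i F)
    have "(\<lambda>x. dpart i (dpart i f) x + (\<Sum>i\<in>F. dpart i (dpart i f) x)) \<in> SC"
      by (intro sc_add insert SC_dpart_SC f)
    then show ?case using insert by simp
  qed
  then show ?thesis unfolding Lap_def[abs_def] .
qed


locale LS =
  fixes p :: real and u :: "R3 \<Rightarrow> real" and G :: "R3 \<Rightarrow> R3"
  assumes p2: "2 < p"
    and Lp: "in_Lp p u"
    and radial: "\<And>x y. norm x = norm y \<Longrightarrow> u x = u y"
    and positive: "\<And>x. x \<noteq> 0 \<Longrightarrow> u x > 0"
    and decreasing: "\<And>x y. x \<noteq> 0 \<Longrightarrow> norm x \<le> norm y \<Longrightarrow> u y \<le> u x"
    and wg: "weak_gradient u G"
    and eqn: "\<And>\<phi>. test_fun \<phi> \<Longrightarrow>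
          integrable lborel (\<lambda>x. riesz (\<lambda>y. u y powr p) x * u x powr (p - 1) * \<phi> x) \<and>
          (LINT x|lborel. (\<Sum>i\<in>UNIV. G x $ i * dpart i \<phi> x) + u x powr (p - 1) * \<phi> x)
          = (LINT x|lborel. riesz (\<lambda>y. u y powr p) x * u x powr (p - 1) * \<phi> x)"
begin

definition U :: "real \<Rightarrow> real" where "U s = u (s *\<^sub>R axis 1 1)"
definition N :: real where "N = (LINT x|lborel. \<bar>u x\<bar> powr p)"

lemma u_meas[measurable]: "u \<in> borel_measurable borel"
  using Lp by (simp add: in_Lp_def)

lemma N_int: "integrable lborel (\<lambda>x. \<bar>u x\<bar> powr p)"
  using Lp by (simp add: in_Lp_def)

lemma u_U: "u x = U (norm x)"
  unfolding U_def by (rule radial) simp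

lemma U_pos: "0 < s \<Longrightarrow> 0 < U s"
  unfolding U_def by (rule positive) simp

lemma U_mono: "0 < s \<Longrightarrow> s \<le> t \<Longrightarrow> U t \<le> U s"
  unfolding U_def by (rule decreasing) auto

lemma u_le: "0 < s \<Longrightarrow> s \<le> norm x \<Longrightarrow> u x \<le> U s"
  using U_mono u_U by auto

lemma u_ge: "x \<noteq> 0 \<Longrightarrow> norm x \<le> s \<Longrightarrow> U s \<le> u x"
  using U_mono u_U by auto

lemma ball_bound:
  assumes s: "0 < s"
  shows "U s powr p * (4/3 * s^3 * pi) \<le> N"
proof -
  have "(LINT (x::R3)|lborel. indicator (ball 0 s) x * U s powr p) \<le> N"
    unfolding N_def
  proof (rule integral_mono_AE)
    show "integrable lborel (\<lambda>x::R3. indicator (ball 0 s) x * U s powr p)"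
      using emeasure_lborel_ball_finite[of "0::R3" s]
      by (intro integrable_mult_left) (simp add: integrable_indicator_iff)
    show "integrable lborel (\<lambda>x. \<bar>u x\<bar> powr p)" by (rule N_int)
    show "AE x in lborel. indicator (ball 0 s) x * U s powr p \<le> \<bar>u x\<bar> powr p"
      using AE_lborel_singleton[of "0::R3"]
    proof eventually_elim
      case (elim x)
      show ?case
      proof (cases "x \<in> ball 0 s")
        case True
        then have "U s \<le> u x" using elim by (intro u_ge) auto
        moreover have "0 < U s" using U_pos s by simp
        ultimately show ?thesis using True p2 by (auto intro!: powr_mono2)
      qed simp
    qed
  qed
  moreover have "(LINT (x::R3)|lborel. indicator (ball 0 s) x * U s powr p) = measure lborel (ball (0::R3) s) * U s powr p"
    using emeasure_lborel_ball_finite[of "0::R3" s] by simp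
  moreover have "measure lborel (ball (0::R3) s) = 4/3 * s^3 * pi"
    using sphere_volume[of s "0::R3"] s by simp
  ultimately show ?thesis by (simp add: mult.commute)
qed

definition R :: "R3 \<Rightarrow> real" where "R = riesz (\<lambda>y. u y powr p)"

lemma riesz_bound:
  assumes x: "x \<noteq> 0"
  shows "R x \<le> (1/(4*pi)) * (22/3 * N / norm x)"
proof -
  define \<rho> where "\<rho> = norm x / 2"
  have \<rho>: "0 < \<rho>" using x by (simp add: \<rho>_def)
  define f where "f y = u y powr p / dist x y" for y
  have f_nn: "0 \<le> f y" for y by (simp add: f_def)
  have pw: "AE y in lborel. ennreal (f y) \<le> ennreal (\<bar>u y\<bar> powr p / \<rho>) + ennreal (U \<rho> powr p * (indicator (ball x \<rho>) y / dist x y))"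
    using AE_lborel_singleton[of "0::R3"]
  proof eventually_elim
    case (elim y)
    have uy: "0 < u y" using positive elim by simp
    show ?case
    proof (cases "dist x y < \<rho>")
      case False
      have "f y \<le> \<bar>u y\<bar> powr p / \<rho>"
        using False \<rho> uy by (simp add: f_def frac_le)
      then have "ennreal (f y) \<le> ennreal (\<bar>u y\<bar> powr p / \<rho>)" by (rule ennreal_leI)
      then show ?thesis by (rule order_trans) simp
    next
      case True
      have "norm y \<ge> \<rho>" using True norm_triangle_ineq2[of x y] by (simp add: \<rho>_def dist_norm)
      then have "u y \<le> U \<rho>" using u_le \<rho> by simp
      then have "u y powr p \<le> U \<rho> powr p" using uy p2 by (intro powr_mono2) auto
      then have "f y \<le> U \<rho> powr p * (indicator (ball x \<rho>) y / dist x y)"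
        using True by (simp add: f_def divide_right_mono)
      then have "ennreal (f y) \<le> ennreal (U \<rho> powr p * (indicator (ball x \<rho>) y / dist x y))" by (rule ennreal_leI)
      then show ?thesis by (rule order_trans) simp
    qed
  qed
  have m: "(\<lambda>y::R3. indicator (ball x \<rho>) y / dist x y) \<in> borel_measurable borel"
    by (intro borel_measurable_divide borel_measurable_indicator borel_measurable_continuous_onI continuous_intros) auto
  have m1: "(\<lambda>y. ennreal (\<bar>u y\<bar> powr p / \<rho>)) \<in> borel_measurable lborel"
  proof -
    have "(\<lambda>y. ennreal (\<bar>u y\<bar> powr p / \<rho>)) \<in> borel_measurable borel" by measurable
    then show ?thesis by (simp only: measurable_lborel2)
  qed
  have m2: "(\<lambda>y. ennreal (U \<rho> powr p * (indicator (ball x \<rho>) y / dist x y))) \<in> borel_measurable lborel"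
  proof -
    have "(\<lambda>y. ennreal (U \<rho> powr p * (indicator (ball x \<rho>) y / dist x y))) \<in> borel_measurable borel"
      using m by measurable
    then show ?thesis by (simp only: measurable_lborel2)
  qed
  have A: "(\<integral>\<^sup>+y. ennreal (f y) \<partial>lborel) \<le> (\<integral>\<^sup>+y. ennreal (\<bar>u y\<bar> powr p / \<rho>) \<partial>lborel) + (\<integral>\<^sup>+y. ennreal (U \<rho> powr p * (indicator (ball x \<rho>) y / dist x y)) \<partial>lborel)"
  proof -
    have "(\<integral>\<^sup>+y. ennreal (f y) \<partial>lborel) \<le> (\<integral>\<^sup>+y. ennreal (\<bar>u y\<bar> powr p / \<rho>) + ennreal (U \<rho> powr p * (indicator (ball x \<rho>) y / dist x y)) \<partial>lborel)"
      by (rule nn_integral_mono_AE[OF pw])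
    also have "\<dots> = (\<integral>\<^sup>+y. ennreal (\<bar>u y\<bar> powr p / \<rho>) \<partial>lborel) + (\<integral>\<^sup>+y. ennreal (U \<rho> powr p * (indicator (ball x \<rho>) y / dist x y)) \<partial>lborel)"
      by (rule nn_integral_add[OF m1 m2])
    finally show ?thesis .
  qed
  have A1: "(\<integral>\<^sup>+y. ennreal (\<bar>u y\<bar> powr p / \<rho>) \<partial>lborel) = ennreal (N / \<rho>)"
  proof -
    have "(\<integral>\<^sup>+y. ennreal (\<bar>u y\<bar> powr p / \<rho>) \<partial>lborel) = ennreal (LINT y|lborel. \<bar>u y\<bar> powr p / \<rho>)"
      using N_int \<rho> by (intro nn_integral_eq_integral) auto
    then show ?thesis by (simp add: N_def)
  qed
  have A2: "(\<integral>\<^sup>+y. ennreal (U \<rho> powr p * (indicator (ball x \<rho>) y / dist x y)) \<partial>lborel)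
       \<le> ennreal (U \<rho> powr p * (32/9 * pi * \<rho>^2))"
  proof -
    have "(\<integral>\<^sup>+y. ennreal (U \<rho> powr p * (indicator (ball x \<rho>) y / dist x y)) \<partial>lborel)
       = (\<integral>\<^sup>+y. ennreal (U \<rho> powr p) * ennreal (indicator (ball x \<rho>) y / dist x y) \<partial>lborel)"
      by (rule nn_integral_cong) (rule ennreal_mult; simp)
    also have "\<dots> = ennreal (U \<rho> powr p) * (\<integral>\<^sup>+y. ennreal (indicator (ball x \<rho>) y / dist x y) \<partial>lborel)"
      using m by (intro nn_integral_cmult) auto
    also have "\<dots> \<le> ennreal (U \<rho> powr p) * ennreal (32/9 * pi * \<rho>^2)"
      by (intro mult_left_mono shell_bound \<rho>) simp
    also have "\<dots> = ennreal (U \<rho> powr p * (32/9 * pi * \<rho>^2))"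
      by (rule ennreal_mult[symmetric]) auto
    finally show ?thesis .
  qed
  have I: "(\<integral>\<^sup>+y. ennreal (f y) \<partial>lborel) \<le> ennreal (N / \<rho> + U \<rho> powr p * (32/9 * pi * \<rho>^2))"
  proof -
    have "(\<integral>\<^sup>+y. ennreal (f y) \<partial>lborel) \<le> ennreal (N / \<rho>) + ennreal (U \<rho> powr p * (32/9 * pi * \<rho>^2))"
    proof -
      have "(\<integral>\<^sup>+y. ennreal (\<bar>u y\<bar> powr p / \<rho>) \<partial>lborel) + (\<integral>\<^sup>+y. ennreal (U \<rho> powr p * (indicator (ball x \<rho>) y / dist x y)) \<partial>lborel)
           \<le> ennreal (N / \<rho>) + ennreal (U \<rho> powr p * (32/9 * pi * \<rho>^2))"
        by (rule add_mono[OF eq_refl[OF A1] A2])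
      with A show ?thesis by (rule order_trans)
    qed
    also have "\<dots> = ennreal (N / \<rho> + U \<rho> powr p * (32/9 * pi * \<rho>^2))"
      using \<rho> by (intro ennreal_plus[symmetric]) (auto simp: N_def)
    finally show ?thesis .
  qed
  have N0: "0 \<le> N" unfolding N_def by simp
  have "(LINT y|lborel. f y) \<le> N / \<rho> + U \<rho> powr p * (32/9 * pi * \<rho>^2)"
  proof -
    have r0: "0 \<le> N / \<rho> + U \<rho> powr p * (32/9 * pi * \<rho>^2)" using N0 \<rho> by simp
    show ?thesis by (rule integral_real_bounded[OF r0 I])
  qed
  also have "U \<rho> powr p * (32/9 * pi * \<rho>^2) \<le> 8/3 * N / \<rho>"
  proof -
    have "U \<rho> powr p * (4/3 * \<rho>^3 * pi) \<le> N" by (rule ball_bound[OF \<rho>])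
    then have "U \<rho> powr p * (4/3 * \<rho>^3 * pi) * (8/3 / \<rho>^2 / \<rho>) \<le> N * (8/3 / \<rho>^2 / \<rho>)"
      using \<rho> by (intro mult_right_mono) auto
    then show ?thesis using \<rho> by (simp add: field_simps power2_eq_square power3_eq_cube)
  qed
  finally have "(LINT y|lborel. f y) \<le> 22/3 * N / norm x" by (simp add: \<rho>_def field_simps)
  moreover have "R x = 1/(4*pi) * (LINT y|lborel. f y)" by (simp add: R_def riesz_def f_def)
  ultimately show ?thesis using divide_right_mono[of "LINT y|lborel. f y" "22/3 * N / norm x" "4*pi"] by simp
qed

end


context LS
begin

lemma G_meas: "(\<lambda>x. G x $ i) \<in> borel_measurable lborel"
  using wg by (simp add: weak_gradient_def)

lemma G_loc: "compact K \<Longrightarrow> integrable lborel (\<lambda>x. indicator K x *\<^sub>R G x $ i)"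
  using wg by (simp add: weak_gradient_def set_integrable_def)

lemma ind_int: "integrable lborel (\<lambda>x::R3. (c::real) * indicator (cball 0 s) x)"
  using emeasure_lborel_cball_finite[of "0::R3" s]
  by (intro Bochner_Integration.integrable_mult_right) (simp add: integrable_indicator_iff)

lemma int_G:
  assumes g: "g \<in> SC" and van: "\<And>x. x \<in> Wset r \<Longrightarrow> g x = 0"
  shows "integrable lborel (\<lambda>x. G x $ i * g x)"
proof -
  obtain M where M: "0 \<le> M" "\<And>x. \<bar>g x\<bar> \<le> M" using bounded_fun[OF g van] by metis
  have gm: "g \<in> borel_measurable lborel"
    using borel_measurable_continuous_onI[OF SC_cont[OF g]] by simp
  show ?thesis
  proof (rule Bochner_Integration.integrable_bound)
    show "integrable lborel (\<lambda>x. M * (indicator (cball 0 (4*r)) x *\<^sub>R G x $ i))"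
      by (intro Bochner_Integration.integrable_mult_right G_loc) simp
    show "(\<lambda>x. G x $ i * g x) \<in> borel_measurable lborel"
      using G_meas gm by (rule borel_measurable_times)
    show "AE x in lborel. norm (G x $ i * g x) \<le> norm (M * (indicator (cball 0 (4*r)) x *\<^sub>R G x $ i))"
    proof (intro AE_I2)
      fix x
      show "norm (G x $ i * g x) \<le> norm (M * (indicator (cball 0 (4*r)) x *\<^sub>R G x $ i))"
      proof (cases "x \<in> cball 0 (4*r)")
        case True
        then show ?thesis using M mult_right_mono[OF M(2)[of x] abs_ge_zero[of "G x $ i"]] by (simp add: abs_mult mult.commute)
      next
        case False
        then have "x \<in> Wset r" by (auto simp: Wset_def)
        then show ?thesis using van by simp
      qed
    qed
  qed
qed

lemma int_u:
  assumes r: "0 < r" and g: "g \<in> SC" and van: "\<And>x. x \<in> Wset r \<Longrightarrow> g x = 0"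
  shows "integrable lborel (\<lambda>x. u x * g x)"
    and "integrable lborel (\<lambda>x. u x powr (p-1) * g x)"
proof -
  obtain M where M: "0 \<le> M" "\<And>x. \<bar>g x\<bar> \<le> M" using bounded_fun[OF g van] by metis
  have gm: "g \<in> borel_measurable lborel"
    using borel_measurable_continuous_onI[OF SC_cont[OF g]] by simp
  have um: "u \<in> borel_measurable lborel" using u_meas by simp
  have pt: "x \<notin> Wset r \<Longrightarrow> x \<in> cball 0 (4*r) \<and> 0 < u x \<and> u x \<le> U r" for x
    using r by (auto simp: Wset_def intro!: positive u_le)
  show "integrable lborel (\<lambda>x. u x * g x)"
  proof (rule Bochner_Integration.integrable_bound[OF ind_int[of "U r * M" "4*r"]])
    show "(\<lambda>x. u x * g x) \<in> borel_measurable lborel" using um gm by (rule borel_measurable_times)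
    show "AE x in lborel. norm (u x * g x) \<le> norm (U r * M * indicator (cball 0 (4*r)) x)"
    proof (intro AE_I2)
      fix x
      show "norm (u x * g x) \<le> norm (U r * M * indicator (cball 0 (4*r)) x)"
      proof (cases "x \<in> Wset r")
        case True then show ?thesis using van by simp
      next
        case False
        with pt[of x] have "\<bar>u x\<bar> \<le> U r" "x \<in> cball 0 (4*r)" by auto
        then show ?thesis using M U_pos[OF r] by (simp add: abs_mult mult_mono)
      qed
    qed
  qed
  show "integrable lborel (\<lambda>x. u x powr (p-1) * g x)"
  proof (rule Bochner_Integration.integrable_bound[OF ind_int[of "U r powr (p-1) * M" "4*r"]])
    show "(\<lambda>x. u x powr (p-1) * g x) \<in> borel_measurable lborel"
      using gm by measurable
    show "AE x in lborel. norm (u x powr (p-1) * g x) \<le> norm (U r powr (p-1) * M * indicator (cball 0 (4*r)) x)"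
    proof (intro AE_I2)
      fix x
      show "norm (u x powr (p-1) * g x) \<le> norm (U r powr (p-1) * M * indicator (cball 0 (4*r)) x)"
      proof (cases "x \<in> Wset r")
        case True then show ?thesis using van by simp
      next
        case False
        with pt[of x] have "u x powr (p-1) \<le> U r powr (p-1)" "x \<in> cball 0 (4*r)"
          using p2 by (auto intro!: powr_mono2)
        then show ?thesis using M by (simp add: abs_mult mult_mono)
      qed
    qed
  qed
qed

lemma identity:
  assumes r: "0 < r"
  shows "integrable lborel (\<lambda>x. R x * u x powr (p - 1) * phi r x)"
    and "integrable lborel (\<lambda>x. u x powr (p - 1) * phi r x)"
    and "integrable lborel (\<lambda>x. u x * Lap (phi r) x)"
    and "- (LINT x|lborel. u x * Lap (phi r) x) + (LINT x|lborel. u x powr (p - 1) * phi r x)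
        = (LINT x|lborel. R x * u x powr (p - 1) * phi r x)"
proof -
  define \<phi> where "\<phi> = phi r"
  have \<phi>: "\<phi> \<in> SC" "\<And>x. x \<in> Wset r \<Longrightarrow> \<phi> x = 0"
    using phi_SC phi_van r by (auto simp: \<phi>_def)
  have d\<phi>: "dpart i \<phi> \<in> SC" "\<And>x. x \<in> Wset r \<Longrightarrow> dpart i \<phi> x = 0" for i
    using \<phi> by (auto intro: SC_dpart_SC dpart_van)
  have dd\<phi>: "dpart i (dpart i \<phi>) \<in> SC" "\<And>x. x \<in> Wset r \<Longrightarrow> dpart i (dpart i \<phi>) x = 0" for i
    using d\<phi>(1) by (auto intro: SC_dpart_SC dpart_van[OF d\<phi>(2)])
  have t\<phi>: "test_fun \<phi>" by (rule test_fun_of[OF \<phi>])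
  have td\<phi>: "test_fun (dpart i \<phi>)" for i by (rule test_fun_of[OF d\<phi>])
  from eqn[OF t\<phi>] have E1: "integrable lborel (\<lambda>x. R x * u x powr (p - 1) * \<phi> x)"
    and E2: "(LINT x|lborel. (\<Sum>i\<in>UNIV. G x $ i * dpart i \<phi> x) + u x powr (p - 1) * \<phi> x)
          = (LINT x|lborel. R x * u x powr (p - 1) * \<phi> x)" by (auto simp: R_def)
  show "integrable lborel (\<lambda>x. R x * u x powr (p - 1) * phi r x)" using E1 by (simp add: \<phi>_def)
  have IG: "integrable lborel (\<lambda>x. G x $ i * dpart i \<phi> x)" for i by (rule int_G[OF d\<phi>])
  have IS: "integrable lborel (\<lambda>x. \<Sum>i\<in>UNIV. G x $ i * dpart i \<phi> x)" by (intro Bochner_Integration.integrable_sum IG)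
  have Iw: "integrable lborel (\<lambda>x. u x powr (p - 1) * \<phi> x)" by (rule int_u(2)[OF r \<phi>])
  then show "integrable lborel (\<lambda>x. u x powr (p - 1) * phi r x)" by (simp add: \<phi>_def)
  have Iu: "integrable lborel (\<lambda>x. u x * dpart i (dpart i \<phi>) x)" for i by (rule int_u(1)[OF r dd\<phi>])
  have Lap_eq: "(\<lambda>x. u x * Lap \<phi> x) = (\<lambda>x. \<Sum>i\<in>UNIV. u x * dpart i (dpart i \<phi>) x)"
    by (simp add: Lap_def sum_distrib_left)
  have IL: "integrable lborel (\<lambda>x. u x * Lap \<phi> x)" unfolding Lap_eq by (intro Bochner_Integration.integrable_sum Iu)
  then show "integrable lborel (\<lambda>x. u x * Lap (phi r) x)" by (simp add: \<phi>_def)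
  have W: "(LINT x|lborel. u x * dpart i (dpart i \<phi>) x) = - (LINT x|lborel. G x $ i * dpart i \<phi> x)" for i
    using wg td\<phi>[of i] by (simp add: weak_gradient_def)
  have "(LINT x|lborel. (\<Sum>i\<in>UNIV. G x $ i * dpart i \<phi> x) + u x powr (p - 1) * \<phi> x)
     = (LINT x|lborel. (\<Sum>i\<in>UNIV. G x $ i * dpart i \<phi> x)) + (LINT x|lborel. u x powr (p - 1) * \<phi> x)"
    by (rule Bochner_Integration.integral_add[OF IS Iw])
  also have "(LINT x|lborel. (\<Sum>i\<in>UNIV. G x $ i * dpart i \<phi> x)) = (\<Sum>i\<in>UNIV. LINT x|lborel. G x $ i * dpart i \<phi> x)"
    by (rule Bochner_Integration.integral_sum) (rule IG)
  also have "\<dots> = - (\<Sum>i\<in>UNIV. LINT x|lborel. u x * dpart i (dpart i \<phi>) x)"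
    by (simp add: W sum_negf)
  also have "(\<Sum>i\<in>UNIV. LINT x|lborel. u x * dpart i (dpart i \<phi>) x) = (LINT x|lborel. u x * Lap \<phi> x)"
    unfolding Lap_eq by (rule Bochner_Integration.integral_sum[symmetric]) (rule Iu)
  finally show "- (LINT x|lborel. u x * Lap (phi r) x) + (LINT x|lborel. u x powr (p - 1) * phi r x)
        = (LINT x|lborel. R x * u x powr (p - 1) * phi r x)" using E2 by (simp add: \<phi>_def)
qed

end


lemma psi_phi1: "psi = phi 1"
  by (simp add: phi_def[abs_def])

lemma int_bounded_ind:
  assumes g: "g \<in> SC" and van: "\<And>x. x \<in> Wset r \<Longrightarrow> g x = 0"
  shows "integrable lborel (\<lambda>x. g x * indicator (cball 0 s) x)"
    and "integrable lborel (\<lambda>x. \<bar>g x\<bar>)"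
proof -
  obtain M where M: "0 \<le> M" "\<And>x. \<bar>g x\<bar> \<le> M" using bounded_fun[OF g van] by metis
  have gm: "g \<in> borel_measurable lborel"
    using borel_measurable_continuous_onI[OF SC_cont[OF g]] by simp
  have ii: "integrable lborel (\<lambda>x::R3. M * indicator (cball 0 t) x)" for t
    using emeasure_lborel_cball_finite[of "0::R3" t]
    by (intro Bochner_Integration.integrable_mult_right) (simp add: integrable_indicator_iff)
  show "integrable lborel (\<lambda>x. g x * indicator (cball 0 s) x)"
  proof (rule Bochner_Integration.integrable_bound[OF ii[of s]])
    show "(\<lambda>x. g x * indicator (cball 0 s) x) \<in> borel_measurable lborel"
      using gm by (intro borel_measurable_times borel_measurable_indicator) auto
    show "AE x in lborel. norm (g x * indicator (cball 0 s) x) \<le> norm (M * indicator (cball 0 s) x)"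
      using M by (intro AE_I2) (auto simp: indicator_def)
  qed
  show "integrable lborel (\<lambda>x. \<bar>g x\<bar>)"
  proof (rule Bochner_Integration.integrable_bound[OF ii[of "4*r"]])
    show "(\<lambda>x. \<bar>g x\<bar>) \<in> borel_measurable lborel"
      using gm by measurable
    show "AE x in lborel. norm (\<bar>g x\<bar>) \<le> norm (M * indicator (cball 0 (4*r)) x)"
    proof (intro AE_I2)
      fix x show "norm (\<bar>g x\<bar>) \<le> norm (M * indicator (cball 0 (4*r)) x)"
      proof (cases "x \<in> Wset r")
        case True then show ?thesis using van by simp
      next
        case False then have "x \<in> cball 0 (4*r)" by (auto simp: Wset_def)
        then show ?thesis using M by simp
      qed
    qed
  qed
qed

definition K1 :: real where "K1 = (LINT x|lborel. \<bar>Lap psi x\<bar>)"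
definition K2 :: real where "K2 = (LINT x|lborel. psi x * indicator (cball 0 3) x)"

lemma K1_nonneg: "0 \<le> K1"
  unfolding K1_def by simp

lemma K2_pos: "0 < K2"
proof -
  define x0 :: R3 where "x0 = 2 *\<^sub>R axis 1 1"
  define c0 where "c0 = H 0 (5/4) * H 0 (39/4)"
  have c0: "0 < c0" by (simp add: c0_def H0_pos)
  have lb: "c0 * indicator (ball x0 (1/2)) y \<le> psi y * indicator (cball 0 3) y" for y
  proof (cases "y \<in> ball x0 (1/2)")
    case True
    have n0: "norm x0 = 2" by (simp add: x0_def)
    have "dist x0 y < 1/2" using True by simp
    then have "norm (x0 - y) < 1/2" by (simp add: dist_norm)
    then have ny: "3/2 < norm y" "norm y < 5/2"
      using norm_triangle_ineq2[of x0 y] norm_triangle_ineq3[of x0 y] n0 by auto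
    have yy: "y \<bullet> y = (norm y)^2" by (simp add: dot_square_norm)
    have "(3/2)^2 < (norm y)^2" "(norm y)^2 < (5/2)^2"
      using ny by (intro power_strict_mono; simp)+
    then have b: "5/4 \<le> -1 + 1 * (y \<bullet> y)" "39/4 \<le> 16 + (-1) * (y \<bullet> y)" using yy by (auto simp: power2_eq_square)
    have "c0 \<le> psi y"
      unfolding c0_def psi_def
      by (intro mult_mono H0_mono b H0_nonneg) auto
    moreover have "y \<in> cball 0 3" using ny by simp
    ultimately show ?thesis using True by simp
  next
    case False then show ?thesis by (simp add: psi_nonneg)
  qed
  have "(LINT y|lborel. c0 * indicator (ball x0 (1/2)) y) \<le> K2"
    unfolding K2_def
  proof (rule integral_mono_AE')
    show "integrable lborel (\<lambda>x. psi x * indicator (cball 0 3) x)"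
      unfolding psi_phi1 by (rule int_bounded_ind(1)[OF phi_SC phi_van]) simp
    show "AE x in lborel. c0 * indicator (ball x0 (1/2)) x \<le> psi x * indicator (cball 0 3) x"
      using lb by simp
    show "AE x in lborel. 0 \<le> psi x * indicator (cball 0 3) x"
      by (simp add: psi_nonneg)
  qed
  moreover have "(LINT y|lborel. c0 * indicator (ball x0 (1/2)) y) = c0 * (4/3 * (1/2)^3 * pi)"
    using emeasure_lborel_ball_finite[of x0 "1/2"] sphere_volume[of "1/2" x0] by simp
  moreover have "0 < c0 * (4/3 * (1/2)^3 * pi)" using c0 by simp
  ultimately show ?thesis by linarith
qed

context LS
begin

definition r1 :: real where "r1 = 22/3 * N / (2*pi) + 1"

lemma N_nonneg: "0 \<le> N" unfolding N_def by simp

lemma r1_pos: "0 < r1"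
proof -
  have "0 \<le> 22/3 * N / (2*pi)" using N_nonneg by simp
  then show ?thesis unfolding r1_def by linarith
qed

lemma R_half: "r1 \<le> norm x \<Longrightarrow> R x \<le> 1/2"
proof -
  assume x: "r1 \<le> norm x"
  then have x0: "x \<noteq> 0" using r1_pos by auto
  have nx: "0 < norm x" using x0 by simp
  have R1: "R x \<le> 1/(4*pi) * (22/3 * N / norm x)" by (rule riesz_bound[OF x0])
  have "22/3 * N / (2*pi) \<le> norm x" using x unfolding r1_def by linarith
  then have "22/3 * N \<le> 2*pi * norm x"
    by (simp add: divide_le_eq) (simp add: algebra_simps)
  then have "22/3 * N / norm x \<le> 2*pi" using nx by (simp add: divide_le_eq)
  then have "1/(4*pi) * (22/3 * N / norm x) \<le> 1/(4*pi) * (2*pi)"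
    by (intro mult_left_mono) auto
  with R1 show ?thesis by simp
qed

lemma recurrence:
  assumes r: "r1 \<le> r"
  shows "U (3*r) powr (p-1) \<le> (2*(K1+1)/K2) * U r / r^2"
proof -
  have r0: "0 < r" using r r1_pos by simp
  define w where "w x = u x powr (p - 1) * phi r x" for x
  have w_nn: "0 \<le> w x" for x by (simp add: w_def phi_nonneg)
  note I1 = identity(1)[OF r0] and I2 = identity(2)[OF r0] and I3 = identity(3)[OF r0] and ID = identity(4)[OF r0]
  have a: "(LINT x|lborel. R x * u x powr (p - 1) * phi r x) \<le> (LINT x|lborel. 1/2 * w x)"
  proof (rule integral_mono)
    show "integrable lborel (\<lambda>x. R x * u x powr (p - 1) * phi r x)" by (rule I1)
    show "integrable lborel (\<lambda>x. 1/2 * w x)" unfolding w_def by (intro Bochner_Integration.integrable_mult_right I2)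
    fix x
    show "R x * u x powr (p - 1) * phi r x \<le> 1/2 * w x"
    proof (cases "phi r x = 0")
      case True then show ?thesis by (simp add: w_def)
    next
      case False
      then have "x \<notin> Wset r" using phi_van r0 by blast
      then have "r1 \<le> norm x" using r by (auto simp: Wset_def)
      then have "R x \<le> 1/2" by (rule R_half)
      then have "R x * w x \<le> 1/2 * w x" by (rule mult_right_mono) (rule w_nn)
      then show ?thesis by (simp add: w_def mult.assoc)
    qed
  qed
  have b: "1/2 * (LINT x|lborel. w x) \<le> (LINT x|lborel. u x * Lap (phi r) x)"
    using a ID by (simp add: w_def)
  have c: "U (3*r) powr (p-1) * (LINT x|lborel. phi r x * indicator (cball 0 (3*r)) x) \<le> (LINT x|lborel. w x)"
  proof -
    have "(LINT x|lborel. U (3*r) powr (p-1) * (phi r x * indicator (cball 0 (3*r)) x)) \<le> (LINT x|lborel. w x)"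
    proof (rule integral_mono_AE')
      show "integrable lborel w" using I2 by (simp add: w_def[abs_def])
      show "AE x in lborel. 0 \<le> w x" by (simp add: w_nn)
      show "AE x in lborel. U (3*r) powr (p-1) * (phi r x * indicator (cball 0 (3*r)) x) \<le> w x"
      proof (intro AE_I2)
        fix x
        show "U (3*r) powr (p-1) * (phi r x * indicator (cball 0 (3*r)) x) \<le> w x"
        proof (cases "x \<in> cball 0 (3*r) \<and> phi r x \<noteq> 0")
          case True
          then have "x \<notin> Wset r" using phi_van r0 by blast
          then have x0: "x \<noteq> 0" using r0 by (auto simp: Wset_def)
          have "U (3*r) \<le> u x" using True x0 by (intro u_ge) auto
          then have "U (3*r) powr (p-1) \<le> u x powr (p-1)"
            using U_pos[of "3*r"] r0 p2 by (intro powr_mono2) auto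
          then show ?thesis using True by (simp add: w_def mult_right_mono phi_nonneg)
        next
          case False
          then show ?thesis using w_nn by (auto simp: indicator_def)
        qed
      qed
    qed
    then show ?thesis by simp
  qed
  have d: "(LINT x|lborel. phi r x * indicator (cball 0 (3*r)) x) = r^3 * K2"
  proof -
    have "(LINT x|lborel. phi r x * indicator (cball 0 (3*r)) x)
        = \<bar>r\<bar>^3 * (LINT y|lborel. phi r (r *\<^sub>R y) * indicator (cball 0 (3*r)) (r *\<^sub>R y))"
      using r0 by (intro integral_scale3) simp
    also have "(\<lambda>y. phi r (r *\<^sub>R y) * indicator (cball 0 (3*r)) (r *\<^sub>R y)) = (\<lambda>y::R3. psi y * indicator (cball 0 3) y)"
      using r0 by (intro ext) (simp add: phi_def indicator_def mem_cball_0)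
    finally show ?thesis using r0 by (simp add: K2_def)
  qed
  have LSC: "Lap (phi r) \<in> SC" by (rule Lap_SC[OF phi_SC])
  have Lvan: "x \<in> Wset r \<Longrightarrow> Lap (phi r) x = 0" for x
    unfolding Lap_def
    by (intro sum.neutral ballI dpart_van[of r "dpart _ (phi r)"] dpart_van[of r "phi r"] phi_van r0)
  have IL: "integrable lborel (\<lambda>x. \<bar>Lap (phi r) x\<bar>)" by (rule int_bounded_ind(2)[OF LSC Lvan])
  have e: "(LINT x|lborel. u x * Lap (phi r) x) \<le> U r * (LINT x|lborel. \<bar>Lap (phi r) x\<bar>)"
  proof -
    have "(LINT x|lborel. u x * Lap (phi r) x) \<le> (LINT x|lborel. U r * \<bar>Lap (phi r) x\<bar>)"
    proof (rule integral_mono)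
      show "integrable lborel (\<lambda>x. u x * Lap (phi r) x)" by (rule I3)
      show "integrable lborel (\<lambda>x. U r * \<bar>Lap (phi r) x\<bar>)" by (intro Bochner_Integration.integrable_mult_right IL)
      fix x
      show "u x * Lap (phi r) x \<le> U r * \<bar>Lap (phi r) x\<bar>"
      proof (cases "x \<in> Wset r")
        case True then show ?thesis using Lvan by simp
      next
        case False
        then have "r \<le> norm x" by (auto simp: Wset_def)
        then have ux: "u x \<le> U r" "0 < u x" using r0 by (auto intro!: u_le positive)
        have "u x * Lap (phi r) x \<le> u x * \<bar>Lap (phi r) x\<bar>" using ux by (intro mult_left_mono) auto
        also have "\<dots> \<le> U r * \<bar>Lap (phi r) x\<bar>" using ux by (intro mult_right_mono) auto
        finally show ?thesis .
      qed
    qed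
    then show ?thesis by simp
  qed
  have f: "(LINT x|lborel. \<bar>Lap (phi r) x\<bar>) = r * K1"
  proof -
    have "K1 = \<bar>1/r\<bar>^3 * (LINT x|lborel. \<bar>Lap psi ((1/r) *\<^sub>R x)\<bar>)"
      unfolding K1_def using r0 by (intro integral_scale3) simp
    moreover have "(LINT x|lborel. \<bar>Lap (phi r) x\<bar>) = (1/r)^2 * (LINT x|lborel. \<bar>Lap psi ((1/r) *\<^sub>R x)\<bar>)"
      using r0 by (simp add: Lap_phi abs_mult)
    ultimately show ?thesis
    proof -
      define A where "A = (LINT x|lborel. \<bar>Lap psi ((1/r) *\<^sub>R x)\<bar>)"
      assume k: "K1 = \<bar>1/r\<bar>^3 * (LINT x|lborel. \<bar>Lap psi ((1/r) *\<^sub>R x)\<bar>)"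
        and l: "(LINT x|lborel. \<bar>Lap (phi r) x\<bar>) = (1/r)^2 * (LINT x|lborel. \<bar>Lap psi ((1/r) *\<^sub>R x)\<bar>)"
      have "A = r^3 * K1" using k r0 unfolding A_def[symmetric] by (simp add: field_simps)
      then show ?thesis using l r0 unfolding A_def[symmetric] by (simp add: field_simps power2_eq_square power3_eq_cube)
    qed
  qed
  define A where "A = U (3*r) powr (p-1)"
  have c': "A * (r^3 * K2) \<le> (LINT x|lborel. w x)" using c d by (simp add: A_def)
  have "1/2 * (A * (r^3 * K2)) \<le> 1/2 * (LINT x|lborel. w x)"
    by (rule mult_left_mono[OF c']) simp
  also note b
  also note e
  also have "U r * (LINT x|lborel. \<bar>Lap (phi r) x\<bar>) = U r * (r * K1)" by (simp only: f)
  finally have h: "1/2 * (A * (r^3 * K2)) \<le> U r * (r * K1)" .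
  have h2: "r * (A * K2 * r^2) \<le> r * (2 * K1 * U r)"
    using h by (simp add: power2_eq_square power3_eq_cube field_simps)
  have h3: "A * K2 * r^2 \<le> 2 * K1 * U r"
    using h2 r0 by (rule mult_left_le_imp_le)
  have g: "A * K2 \<le> 2 * K1 * U r / r^2"
    using h3 r0 by (simp add: pos_le_divide_eq)
  have "U (3*r) powr (p-1) \<le> 2 * K1 * U r / r^2 / K2"
    unfolding A_def[symmetric] using g by (subst pos_le_divide_eq[OF K2_pos])
  also have "\<dots> \<le> 2 * (K1+1) * U r / r^2 / K2"
    using K2_pos U_pos[OF r0] r0 by (intro divide_right_mono mult_right_mono) auto
  finally show ?thesis by (simp add: field_simps)
qed

end


theorem lemma2p2:
  fixes p :: real and u :: "R3 \<Rightarrow> real"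
  assumes "2 < p" and "p < 5"
    and "in_dotH1 u" and "in_Lp p u"
    and radial: "\<And>x y. norm x = norm y \<Longrightarrow> u x = u y"
    and positive: "\<And>x. x \<noteq> 0 \<Longrightarrow> u x > 0"
    and decreasing: "\<And>x y. x \<noteq> 0 \<Longrightarrow> norm x \<le> norm y \<Longrightarrow> u y \<le> u x"
    and "weak_solution p u"
  shows "\<exists>r0 > 0. \<exists>C > 0. \<forall>x. norm x > r0 \<longrightarrow> u x \<le> C / norm x powr (2 / (p - 2))"
proof -
  from \<open>weak_solution p u\<close> obtain G where wg: "weak_gradient u G"
    and eq: "\<forall>\<phi>. test_fun \<phi> \<longrightarrow>
          integrable lborel (\<lambda>x. riesz (\<lambda>y. u y powr p) x * u x powr (p - 1) * \<phi> x) \<and>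
          (LINT x|lborel. (\<Sum>i\<in>UNIV. G x $ i * dpart i \<phi> x) + u x powr (p - 1) * \<phi> x)
          = (LINT x|lborel. riesz (\<lambda>y. u y powr p) x * u x powr (p - 1) * \<phi> x)"
    unfolding weak_solution_def by blast
  interpret LS p u G
    apply unfold_locales
          apply (rule assms(1))
         apply (rule assms(4))
        apply (erule radial)
       apply (erule positive)
      apply (erule (1) decreasing)
     apply (rule wg)
    using eq apply blast
    done
  have K: "0 < 2*(K1+1)/K2" using K1_nonneg K2_pos by simp
  obtain C where C: "C > 0" "\<And>s. s > r1 \<Longrightarrow> U s \<le> C / s powr (2/(p-2))"
    using iterate_decay[OF \<open>2 < p\<close> r1_pos K U_pos U_mono recurrence] by blast
  have "\<forall>x::R3. norm x > r1 \<longrightarrow> u x \<le> C / norm x powr (2 / (p - 2))"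
    using C(2) u_U by simp
  then show ?thesis using r1_pos C(1) by blast
qed


end
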